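(* There exists a dynamic network congestion game with a Nash equilibrium $\pi$ such that for every blind Nash equilibrium $\pi'$ of that game, the social cost of $\pi$ is strictly smaller than the social cost of $\pi'$.
   Context: Let $\mathcal F$ be the set of non-decreasing piecewise-affine functions $\mathbb N\to\mathbb N$ with finitely many pieces. An arena is $\mathcal A=(V,E,\mathsf{src},\mathsf{tgt})$ with $V$ finite, $E$ a partial function $V\times V\to\mathcal F$ (edge $e$ has cost function $\ell_e$); $\mathsf{tgt}$ has only a self-loop of constant cost $0$ and is reachable from every state. A dynamic NCG $(\mathcal A,n)$ has players $[n]$, all starting in $\mathsf{src}$; in each step each player simultaneously picks an edge $e_i$ leaving their current state, moves along it and pays $\ell_{e_i}(u_i)$ with $u_i$ the number of players choosing $e_i$ in that step. Strategies map finite histories to edges leaving the player's current state; $\mathrm{cost}_i(\sigma)$ is player $i$'s total payment along the outcome of profile $\sigma$ until reaching $\mathsf{tgt}$, and the social cost is $\sum_i\mathrm{cost}_i(\sigma)$. A Nash equilibrium is a profile in which no player can lower their cost by unilaterally changing strategy. A strategy is blind if it depends only on the states visited by the player itself (follows a fixed path of $\mathcal A$); a blind Nash equilibrium is a blind profile where no player can lower their cost by switching to another blind strategy. *)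

theory Defs
  imports Complex_Main "HOL-Library.Extended_Nat"
begin

text \<open>Non-decreasing piecewise-affine functions with finitely many pieces: there is a
finite sorted list of breakpoints; the piece containing x is indexed by the number of
breakpoints \<le> x, and on each piece f coincides with an affine function.\<close>
definition piecewise_affine_fun :: "(nat \<Rightarrow> nat) \<Rightarrow> bool" where
  "piecewise_affine_fun f \<longleftrightarrow> mono f \<and>
     (\<exists>ts :: nat list. \<exists>a b :: nat \<Rightarrow> real. sorted ts \<and>
        (\<forall>x. real (f x) = a (card {t \<in> set ts. t \<le> x}) * real x + b (card {t \<in> set ts. t \<le> x})))"

type_synonym edges = "nat \<Rightarrow> nat \<Rightarrow> (nat \<Rightarrow> nat) option"

definition is_edge :: "edges \<Rightarrow> nat \<Rightarrow> nat \<Rightarrow> bool" where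
  "is_edge E u v \<longleftrightarrow> E u v \<noteq> None"

definition arena :: "nat set \<Rightarrow> edges \<Rightarrow> nat \<Rightarrow> nat \<Rightarrow> bool" where
  "arena V E src tgt \<longleftrightarrow> finite V \<and> src \<in> V \<and> tgt \<in> V \<and>
     (\<forall>u v l. E u v = Some l \<longrightarrow> u \<in> V \<and> v \<in> V \<and> piecewise_affine_fun l) \<and>
     (\<forall>v. is_edge E tgt v \<longleftrightarrow> v = tgt) \<and> E tgt tgt = Some (\<lambda>_. 0) \<and>
     (\<forall>v\<in>V. (v, tgt) \<in> {(x, y). is_edge E x y}\<^sup>*)"

text \<open>A configuration gives the current state of every player; a history is the (nonempty)
list of configurations so far. A strategy maps a history to the next state of the player,
i.e. to an edge leaving the player's current state.\<close>
type_synonym config = "nat \<Rightarrow> nat"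
type_synonym history = "config list"
type_synonym strategy = "history \<Rightarrow> nat"
type_synonym profile = "nat \<Rightarrow> strategy"

definition valid_strategy :: "nat set \<Rightarrow> edges \<Rightarrow> nat \<Rightarrow> strategy \<Rightarrow> bool" where
  "valid_strategy V E i s \<longleftrightarrow>
     (\<forall>h. h \<noteq> [] \<longrightarrow> last h i \<in> V \<longrightarrow> is_edge E (last h i) (s h))"

definition valid_profile :: "nat set \<Rightarrow> edges \<Rightarrow> nat \<Rightarrow> profile \<Rightarrow> bool" where
  "valid_profile V E n \<sigma> \<longleftrightarrow> (\<forall>i<n. valid_strategy V E i (\<sigma> i))"

text \<open>History of the outcome after k steps (players outside [n] are dummies kept at src).\<close>
fun hist :: "nat \<Rightarrow> nat \<Rightarrow> profile \<Rightarrow> nat \<Rightarrow> history" where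
  "hist src n \<sigma> 0 = [\<lambda>_. src]"
| "hist src n \<sigma> (Suc k) = hist src n \<sigma> k @ [\<lambda>i. if i < n then \<sigma> i (hist src n \<sigma> k) else src]"

definition pos :: "nat \<Rightarrow> nat \<Rightarrow> profile \<Rightarrow> nat \<Rightarrow> nat \<Rightarrow> nat" where
  "pos src n \<sigma> k i = last (hist src n \<sigma> k) i"

definition load :: "nat \<Rightarrow> nat \<Rightarrow> profile \<Rightarrow> nat \<Rightarrow> nat \<Rightarrow> nat \<Rightarrow> nat" where
  "load src n \<sigma> k u v = card {j. j < n \<and> pos src n \<sigma> k j = u \<and> pos src n \<sigma> (Suc k) j = v}"

definition step_cost :: "edges \<Rightarrow> nat \<Rightarrow> nat \<Rightarrow> profile \<Rightarrow> nat \<Rightarrow> nat \<Rightarrow> nat" where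
  "step_cost E src n \<sigma> i k =
     (let u = pos src n \<sigma> k i; v = pos src n \<sigma> (Suc k) i
      in the (E u v) (load src n \<sigma> k u v))"

definition cost :: "edges \<Rightarrow> nat \<Rightarrow> nat \<Rightarrow> nat \<Rightarrow> profile \<Rightarrow> nat \<Rightarrow> enat" where
  "cost E src tgt n \<sigma> i =
     (if \<exists>K. pos src n \<sigma> K i = tgt
      then enat (\<Sum>k < (LEAST K. pos src n \<sigma> K i = tgt). step_cost E src n \<sigma> i k)
      else \<infinity>)"

definition social_cost :: "edges \<Rightarrow> nat \<Rightarrow> nat \<Rightarrow> nat \<Rightarrow> profile \<Rightarrow> enat" where
  "social_cost E src tgt n \<sigma> = (\<Sum>i<n. cost E src tgt n \<sigma> i)"

definition nash_eq :: "nat set \<Rightarrow> edges \<Rightarrow> nat \<Rightarrow> nat \<Rightarrow> nat \<Rightarrow> profile \<Rightarrow> bool" where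
  "nash_eq V E src tgt n \<sigma> \<longleftrightarrow> valid_profile V E n \<sigma> \<and>
     (\<forall>i<n. \<forall>\<tau>. valid_strategy V E i \<tau> \<longrightarrow>
        cost E src tgt n \<sigma> i \<le> cost E src tgt n (\<sigma>(i := \<tau>)) i)"

definition blind_strategy :: "nat \<Rightarrow> strategy \<Rightarrow> bool" where
  "blind_strategy i s \<longleftrightarrow> (\<exists>g. \<forall>h. s h = g (map (\<lambda>c. c i) h))"

definition blind_nash_eq :: "nat set \<Rightarrow> edges \<Rightarrow> nat \<Rightarrow> nat \<Rightarrow> nat \<Rightarrow> profile \<Rightarrow> bool" where
  "blind_nash_eq V E src tgt n \<sigma> \<longleftrightarrow> valid_profile V E n \<sigma> \<and>
     (\<forall>i<n. blind_strategy i (\<sigma> i)) \<and>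
     (\<forall>i<n. \<forall>\<tau>. valid_strategy V E i \<tau> \<longrightarrow> blind_strategy i \<tau> \<longrightarrow>
        cost E src tgt n \<sigma> i \<le> cost E src tgt n (\<sigma>(i := \<tau>)) i)"

end

theory Submission
  imports Defs
begin

definition ff :: "nat \<Rightarrow> nat \<Rightarrow> nat \<Rightarrow> nat" where
  "ff a b x = (if x \<le> 1 then a else b)"

definition Eg :: edges where
  "Eg u v = (if u=0 \<and> v=1 then Some (ff 0 2) else if u=0 \<and> v=2 then Some (ff 1 1)
    else if u=1 \<and> v=2 then Some (ff 1 4) else if u=1 \<and> v=3 then Some (ff 0 1)
    else if u=2 \<and> v=3 then Some (ff 2 4) else if u=3 \<and> v=4 then Some (ff 1 4)
    else if u=4 \<and> v=4 then Some (\<lambda>_. 0) else None)"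

definition tr :: "nat list \<Rightarrow> nat \<Rightarrow> nat" where
  "tr xs k = (if k < length xs then xs ! k else 4)"

definition mk :: "(nat \<Rightarrow> nat) \<Rightarrow> (nat \<Rightarrow> nat) \<Rightarrow> nat \<Rightarrow> nat \<Rightarrow> nat" where
  "mk p q = (\<lambda>k j. if j = 0 then p k else if j = 1 then q k else 0)"

lemma card2: "card {j. j < (2::nat) \<and> P j} = of_bool (P 0) + of_bool (P 1)"
proof -
  have "{j. j < (2::nat) \<and> P j} = (if P 0 then {0} else {}) \<union> (if P 1 then {1} else {})"
    using less_2_cases by auto
  then show ?thesis by auto
qed

lemma least_tr: "4 \<notin> set xs \<Longrightarrow> (LEAST K. tr xs K = 4) = length xs"
  apply (rule Least_equality)
   apply (simp add: tr_def)
  by (metis not_le nth_mem tr_def)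

lemma pa_ff: "a \<le> b \<Longrightarrow> piecewise_affine_fun (ff a b)"
  unfolding piecewise_affine_fun_def
  apply (intro conjI)
   apply (auto simp: mono_def ff_def)[1]
  apply (rule exI[of _ "[2]"])
  apply (rule exI[of _ "\<lambda>_. 0"])
  apply (rule exI[of _ "\<lambda>i. if i = 0 then real a else real b"])
  apply (auto simp: ff_def)
  done


lemma cost_mk0:
  assumes "pos 0 2 \<sigma> = mk p q" "p K = 4" "\<forall>k<K. p k \<noteq> 4"
  shows "cost Eg 0 4 2 \<sigma> 0 = enat (\<Sum>k<K. the (Eg (p k) (p (Suc k)))
     (1 + of_bool (q k = p k \<and> q (Suc k) = p (Suc k))))"
proof -
  have l: "(LEAST K. p K = 4) = K"
    by (rule Least_equality) (use assms in \<open>auto simp: not_le[symmetric]\<close>)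
  show ?thesis
    unfolding cost_def step_cost_def load_def assms(1) using assms(2) l
    by (auto simp: mk_def card2 Let_def)
qed

lemma cost_mk1:
  assumes "pos 0 2 \<sigma> = mk p q" "q K = 4" "\<forall>k<K. q k \<noteq> 4"
  shows "cost Eg 0 4 2 \<sigma> 1 = enat (\<Sum>k<K. the (Eg (q k) (q (Suc k)))
     (1 + of_bool (p k = q k \<and> p (Suc k) = q (Suc k))))"
proof -
  have l: "(LEAST K. q K = 4) = K"
    by (rule Least_equality) (use assms in \<open>auto simp: not_le[symmetric]\<close>)
  show ?thesis
    unfolding cost_def step_cost_def load_def assms(1) using assms(2) l
    by (auto simp: mk_def card2 Let_def)
qed

definition trA :: "nat \<Rightarrow> nat" where "trA k = (if k=0 then 0 else if k=1 then 2 else if k=2 then 3 else 4)"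
definition trB :: "nat \<Rightarrow> nat" where "trB k = (if k=0 then 0 else if k=1 then 1 else if k=2 then 2 else if k=3 then 3 else 4)"
definition trC :: "nat \<Rightarrow> nat" where "trC k = (if k=0 then 0 else if k=1 then 1 else if k=2 then 3 else 4)"

lemma LA: "trA 3 = 4" "\<forall>k<3. trA k \<noteq> 4" by (auto simp: trA_def)
lemma LB: "trB 4 = 4" "\<forall>k<4. trB k \<noteq> 4" by (auto simp: trB_def)
lemma LC: "trC 3 = 4" "\<forall>k<3. trC k \<noteq> 4" by (auto simp: trC_def)

lemmas trdefs = trA_def trB_def trC_def
lemma s3: "(\<Sum>k<(3::nat). f k) = f 0 + f 1 + (f 2::nat)" by (simp add: eval_nat_numeral)
lemma s4: "(\<Sum>k<(4::nat). f k) = f 0 + f 1 + f 2 + (f 3::nat)" by (simp add: eval_nat_numeral)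

lemma cBB0: "pos 0 2 \<sigma> = mk trB trB \<Longrightarrow> cost Eg 0 4 2 \<sigma> 0 = enat 14"
  by (drule cost_mk0[OF _ LB]) (simp add: s4 trdefs Eg_def ff_def)
lemma cBB1: "pos 0 2 \<sigma> = mk trB trB \<Longrightarrow> cost Eg 0 4 2 \<sigma> 1 = enat 14"
  by (drule cost_mk1[OF _ LB]) (simp add: s4 trdefs Eg_def ff_def)

lemma cBC0: "pos 0 2 \<sigma> = mk trB trC \<Longrightarrow> cost Eg 0 4 2 \<sigma> 0 = enat 6"
  by (drule cost_mk0[OF _ LB]) (simp add: s4 trdefs Eg_def ff_def)
lemma cBC1: "pos 0 2 \<sigma> = mk trB trC \<Longrightarrow> cost Eg 0 4 2 \<sigma> 1 = enat 3"
  by (drule cost_mk1[OF _ LC]) (simp add: s3 trdefs Eg_def ff_def)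

lemma cBA0: "pos 0 2 \<sigma> = mk trB trA \<Longrightarrow> cost Eg 0 4 2 \<sigma> 0 = enat 4"
  by (drule cost_mk0[OF _ LB]) (simp add: s4 trdefs Eg_def ff_def)
lemma cBA1: "pos 0 2 \<sigma> = mk trB trA \<Longrightarrow> cost Eg 0 4 2 \<sigma> 1 = enat 4"
  by (drule cost_mk1[OF _ LA]) (simp add: s3 trdefs Eg_def ff_def)

lemma cCB0: "pos 0 2 \<sigma> = mk trC trB \<Longrightarrow> cost Eg 0 4 2 \<sigma> 0 = enat 3"
  by (drule cost_mk0[OF _ LC]) (simp add: s3 trdefs Eg_def ff_def)
lemma cCB1: "pos 0 2 \<sigma> = mk trC trB \<Longrightarrow> cost Eg 0 4 2 \<sigma> 1 = enat 6"
  by (drule cost_mk1[OF _ LB]) (simp add: s4 trdefs Eg_def ff_def)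

lemma cCC0: "pos 0 2 \<sigma> = mk trC trC \<Longrightarrow> cost Eg 0 4 2 \<sigma> 0 = enat 7"
  by (drule cost_mk0[OF _ LC]) (simp add: s3 trdefs Eg_def ff_def)
lemma cCC1: "pos 0 2 \<sigma> = mk trC trC \<Longrightarrow> cost Eg 0 4 2 \<sigma> 1 = enat 7"
  by (drule cost_mk1[OF _ LC]) (simp add: s3 trdefs Eg_def ff_def)

lemma cCA0: "pos 0 2 \<sigma> = mk trC trA \<Longrightarrow> cost Eg 0 4 2 \<sigma> 0 = enat 4"
  by (drule cost_mk0[OF _ LC]) (simp add: s3 trdefs Eg_def ff_def)
lemma cCA1: "pos 0 2 \<sigma> = mk trC trA \<Longrightarrow> cost Eg 0 4 2 \<sigma> 1 = enat 7"
  by (drule cost_mk1[OF _ LA]) (simp add: s3 trdefs Eg_def ff_def)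

lemma cAB0: "pos 0 2 \<sigma> = mk trA trB \<Longrightarrow> cost Eg 0 4 2 \<sigma> 0 = enat 4"
  by (drule cost_mk0[OF _ LA]) (simp add: s3 trdefs Eg_def ff_def)
lemma cAB1: "pos 0 2 \<sigma> = mk trA trB \<Longrightarrow> cost Eg 0 4 2 \<sigma> 1 = enat 4"
  by (drule cost_mk1[OF _ LB]) (simp add: s4 trdefs Eg_def ff_def)

lemma cAC0: "pos 0 2 \<sigma> = mk trA trC \<Longrightarrow> cost Eg 0 4 2 \<sigma> 0 = enat 7"
  by (drule cost_mk0[OF _ LA]) (simp add: s3 trdefs Eg_def ff_def)
lemma cAC1: "pos 0 2 \<sigma> = mk trA trC \<Longrightarrow> cost Eg 0 4 2 \<sigma> 1 = enat 4"
  by (drule cost_mk1[OF _ LC]) (simp add: s3 trdefs Eg_def ff_def)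

lemma cAA0: "pos 0 2 \<sigma> = mk trA trA \<Longrightarrow> cost Eg 0 4 2 \<sigma> 0 = enat 9"
  by (drule cost_mk0[OF _ LA]) (simp add: s3 trdefs Eg_def ff_def)
lemma cAA1: "pos 0 2 \<sigma> = mk trA trA \<Longrightarrow> cost Eg 0 4 2 \<sigma> 1 = enat 9"
  by (drule cost_mk1[OF _ LA]) (simp add: s3 trdefs Eg_def ff_def)


lemma hist_ne: "hist src n \<sigma> k \<noteq> []" by (cases k) auto
lemma pos0: "pos src n \<sigma> 0 i = src" by (simp add: pos_def)
lemma posSuc: "pos src n \<sigma> (Suc k) i = (if i < n then \<sigma> i (hist src n \<sigma> k) else src)"
  by (simp add: pos_def)
lemma last_hist: "last (hist src n \<sigma> k) i = pos src n \<sigma> k i" by (simp add: pos_def)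

lemma valid_step: "valid_profile V E n \<sigma> \<Longrightarrow> i < n \<Longrightarrow> pos src n \<sigma> k i \<in> V \<Longrightarrow>
   is_edge E (pos src n \<sigma> k i) (pos src n \<sigma> (Suc k) i)"
  unfolding valid_profile_def valid_strategy_def
  by (metis hist_ne last_hist posSuc)

lemma edgeEg: "is_edge Eg u v \<longleftrightarrow> (u=0\<and>v=1) \<or> (u=0\<and>v=2) \<or> (u=1\<and>v=2) \<or> (u=1\<and>v=3)
   \<or> (u=2\<and>v=3) \<or> (u=3\<and>v=4) \<or> (u=4\<and>v=4)"
  by (auto simp: is_edge_def Eg_def)

definition VV :: "nat set" where "VV = {0,1,2,3,4}"

lemma traj:
  assumes v: "valid_profile VV Eg 2 \<sigma>" and i: "i < 2"
  shows "(\<lambda>k. pos 0 2 \<sigma> k i) \<in> {trA, trB, trC}"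
proof -
  define x where "x k = pos 0 2 \<sigma> k i" for k
  have inV: "x k \<in> VV" for k
  proof (induction k)
    case 0 then show ?case by (simp add: x_def pos0 VV_def)
  next
    case (Suc k)
    then have "is_edge Eg (x k) (x (Suc k))" using valid_step[OF v i] by (simp add: x_def)
    then show ?case by (auto simp: edgeEg VV_def)
  qed
  have st: "is_edge Eg (x k) (x (Suc k))" for k
    using valid_step[OF v i] inV by (simp add: x_def)
  have stay: "x k = 4 \<Longrightarrow> x (k + m) = 4" for k m
  proof (induction m)
    case 0 then show ?case by simp
  next
    case (Suc m) then show ?case using st[of "k+m"] by (simp add: edgeEg)
  qed
  have x0: "x 0 = 0" by (simp add: x_def pos0)
  have x1: "x 1 = 1 \<or> x 1 = 2" using st[of 0] x0 by (simp add: edgeEg)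
  have e1: "x k = 1 \<Longrightarrow> x (Suc k) = 2 \<or> x (Suc k) = 3" for k
    using st[of k] by (auto simp: edgeEg)
  have e2: "x k = 2 \<Longrightarrow> x (Suc k) = 3" for k
    using st[of k] by (auto simp: edgeEg)
  have e3: "x k = 3 \<Longrightarrow> x (Suc k) = 4" for k
    using st[of k] by (auto simp: edgeEg)
  have after: "x K = 4 \<Longrightarrow> k \<ge> K \<Longrightarrow> x k = 4" for K k
    using stay[of K "k - K"] by simp
  consider "x 1 = 2" "x 2 = 3" "x 3 = 4"
    | "x 1 = 1" "x 2 = 2" "x 3 = 3" "x 4 = 4"
    | "x 1 = 1" "x 2 = 3" "x 3 = 4"
    using x1 e1[of 1] e2[of 1] e2[of 2] e3[of 2] e3[of 3]
    by (metis numeral_2_eq_2 numeral_3_eq_3 One_nat_def eval_nat_numeral(3) Suc_numeral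
        semiring_norm(2) semiring_norm(8))
  then show ?thesis
  proof cases
    case 1
    then have "x = trA"
      using x0 after[of 3] by (auto simp: trA_def)
    then show ?thesis by (simp add: x_def[abs_def])
  next
    case 2
    then have "x = trB"
      using x0 after[of 4] by (auto simp: trB_def)
    then show ?thesis by (simp add: x_def[abs_def])
  next
    case 3
    then have "x = trC"
      using x0 after[of 3] by (auto simp: trC_def)
    then show ?thesis by (simp add: x_def[abs_def])
  qed
qed

lemma pos_mk: "pos 0 2 \<sigma> = mk (\<lambda>k. pos 0 2 \<sigma> k 0) (\<lambda>k. pos 0 2 \<sigma> k 1)"
proof (intro ext)
  fix k j
  show "pos 0 2 \<sigma> k j = mk (\<lambda>k. pos 0 2 \<sigma> k 0) (\<lambda>k. pos 0 2 \<sigma> k 1) k j"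
    by (cases k) (auto simp: mk_def pos0 posSuc)
qed

lemma blind_map:
  assumes "blind_strategy j (\<sigma> j)" "\<sigma>' j = \<sigma> j" "j < n"
  shows "map (\<lambda>c. c j) (hist src n \<sigma> k) = map (\<lambda>c. c j) (hist src n \<sigma>' k)"
proof (induction k)
  case 0 then show ?case by simp
next
  case (Suc k)
  obtain g where g: "\<And>h. \<sigma> j h = g (map (\<lambda>c. c j) h)"
    using assms(1) unfolding blind_strategy_def by blast
  show ?case using Suc assms(2,3) by (simp add: g)
qed

lemma blind_pos:
  assumes "blind_strategy j (\<sigma> j)" "\<sigma>' j = \<sigma> j" "j < n"
  shows "pos src n \<sigma>' k j = pos src n \<sigma> k j"
proof -
  have "last (map (\<lambda>c. c j) (hist src n \<sigma> k)) = last (map (\<lambda>c. c j) (hist src n \<sigma>' k))"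
    using blind_map[of j \<sigma> \<sigma>' n src k] assms by simp
  then show ?thesis by (simp add: pos_def last_map hist_ne)
qed

lemma tr_det:
  assumes "p \<in> {trA, trB, trC}"
  shows "p 1 = 2 \<Longrightarrow> p = trA" "p 1 = 1 \<Longrightarrow> p 2 = 2 \<Longrightarrow> p = trB"
        "p 1 = 1 \<Longrightarrow> p 2 = 3 \<Longrightarrow> p = trC"
  using assms by (auto simp: trdefs)


lemma pa_0: "piecewise_affine_fun (\<lambda>_. 0)"
  unfolding piecewise_affine_fun_def
  by (auto simp: mono_def intro!: exI[of _ "[]"] exI[of _ "\<lambda>_. 0"])

lemma arenaEg: "arena VV Eg 0 4"
proof -
  let ?R = "{(x, y). is_edge Eg x y}"
  have r3: "(3, 4) \<in> ?R\<^sup>*" by (rule r_into_rtrancl) (simp add: edgeEg)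
  have r2: "(2, 4) \<in> ?R\<^sup>*" by (rule converse_rtrancl_into_rtrancl[OF _ r3]) (simp add: edgeEg)
  have r1: "(1, 4) \<in> ?R\<^sup>*" by (rule converse_rtrancl_into_rtrancl[OF _ r2]) (simp add: edgeEg)
  have r0: "(0, 4) \<in> ?R\<^sup>*" by (rule converse_rtrancl_into_rtrancl[OF _ r2]) (simp add: edgeEg)
  have r4: "(4, 4) \<in> ?R\<^sup>*" by simp
  have e: "\<forall>u v l. Eg u v = Some l \<longrightarrow> u \<in> VV \<and> v \<in> VV \<and> piecewise_affine_fun l"
    by (auto simp: Eg_def VV_def pa_ff pa_0 split: if_splits)
  have t: "\<forall>v. is_edge Eg 4 v \<longleftrightarrow> v = 4" by (simp add: edgeEg)
  have t2: "Eg 4 4 = Some (\<lambda>_. 0)" by (simp add: Eg_def)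
  have rr: "\<forall>v\<in>VV. (v, 4) \<in> ?R\<^sup>*"
    unfolding VV_def using r0 r1 r2 r3 r4 by blast
  have f: "finite VV" "0 \<in> VV" "4 \<in> VV" by (auto simp: VV_def)
  show ?thesis unfolding arena_def
    using e t t2 rr f by blast
qed

definition nxtA :: "nat \<Rightarrow> nat" where "nxtA v = (if v=0 \<or> v=1 then 2 else if v=2 then 3 else 4)"
definition nxtC :: "nat \<Rightarrow> nat" where "nxtC v = (if v=0 then 1 else if v=1 \<or> v=2 then 3 else 4)"
definition pi0 :: strategy where "pi0 h = nxtA (last h 0)"
definition pi1 :: strategy where "pi1 h = (if last h 1 = 0 then 1 else if last h 1 = 1 then
   (if last h 0 = 1 then 3 else 2) else if last h 1 = 2 then 3 else 4)"
definition piP :: profile where "piP i = (if i = 0 then pi0 else pi1)"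
definition tauC :: "nat \<Rightarrow> strategy" where "tauC i h = nxtC (last (map (\<lambda>c. c i) h))"

lemma v_pi0: "valid_strategy VV Eg 0 pi0"
  by (auto simp: valid_strategy_def pi0_def nxtA_def VV_def edgeEg)
lemma v_pi1: "valid_strategy VV Eg 1 pi1"
  by (auto simp: valid_strategy_def pi1_def VV_def edgeEg)
lemma v_tau: "valid_strategy VV Eg i (tauC i)"
  by (auto simp: valid_strategy_def tauC_def nxtC_def VV_def edgeEg last_map)
lemma b_tau: "blind_strategy i (tauC i)"
  unfolding blind_strategy_def tauC_def by (rule exI[of _ "\<lambda>l. nxtC (last l)"]) simp

lemma v_pi1': "valid_strategy VV Eg (Suc 0) pi1" using v_pi1 by simp

lemma vp2: "valid_strategy VV Eg 0 (\<sigma> 0) \<Longrightarrow> valid_strategy VV Eg 1 (\<sigma> 1) \<Longrightarrow> valid_profile VV Eg 2 \<sigma>"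
proof (unfold valid_profile_def, intro allI impI)
  fix i :: nat assume "i < 2" and "valid_strategy VV Eg 0 (\<sigma> 0)" "valid_strategy VV Eg 1 (\<sigma> 1)"
  moreover have "i = 0 \<or> i = 1" using \<open>i < 2\<close> by auto
  ultimately show "valid_strategy VV Eg i (\<sigma> i)" by auto
qed

lemma pos_tau: "\<sigma> i = tauC i \<Longrightarrow> i < 2 \<Longrightarrow> pos 0 2 \<sigma> 1 i = 1 \<and> pos 0 2 \<sigma> 2 i = 3"
  using posSuc[of 0 2 \<sigma> 0 i] posSuc[of 0 2 \<sigma> 1 i]
  by (simp add: tauC_def last_map hist_ne last_hist numeral_2_eq_2 pos0 nxtC_def)

lemma pos_pi0: "\<sigma> 0 = pi0 \<Longrightarrow> pos 0 2 \<sigma> 1 0 = 2"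
  using posSuc[of 0 2 \<sigma> 0 0] by (simp add: pi0_def nxtA_def)

lemma pos_pi1: "\<sigma> 1 = pi1 \<Longrightarrow> pos 0 2 \<sigma> 1 1 = 1 \<and> pos 0 2 \<sigma> 2 1 = (if pos 0 2 \<sigma> 1 0 = 1 then 3 else 2)"
  using posSuc[of 0 2 \<sigma> 0 1] posSuc[of 0 2 \<sigma> 1 1] posSuc[of 0 2 \<sigma> 0 0]
  by (simp add: pi1_def last_hist numeral_2_eq_2 pos0)

lemma trajs:
  assumes "valid_profile VV Eg 2 \<sigma>"
  obtains p q where "pos 0 2 \<sigma> = mk p q" "p \<in> {trA, trB, trC}" "q \<in> {trA, trB, trC}"
    "\<And>k. pos 0 2 \<sigma> k 0 = p k" "\<And>k. pos 0 2 \<sigma> k 1 = q k"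
proof -
  have a: "(\<lambda>k. pos 0 2 \<sigma> k 0) \<in> {trA, trB, trC}" by (rule traj[OF assms]) simp
  have b: "(\<lambda>k. pos 0 2 \<sigma> k 1) \<in> {trA, trB, trC}" by (rule traj[OF assms]) simp
  show ?thesis by (rule that[OF pos_mk a b]) simp_all
qed

lemmas ctab = cAA0 cAB0 cAC0 cBA0 cBB0 cBC0 cCA0 cCB0 cCC0
              cAA1 cAB1 cAC1 cBA1 cBB1 cBC1 cCA1 cCB1 cCC1

lemma social2: "social_cost E src tgt 2 \<sigma> = cost E src tgt 2 \<sigma> 0 + cost E src tgt 2 \<sigma> 1"
  by (simp add: social_cost_def eval_nat_numeral)



lemma final:
  assumes "p = trA \<or> p = trB \<or> p = trC" "q = trA \<or> q = trB \<or> q = trC"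
    "pos 0 2 \<sigma> = mk p q" "pos 0 2 \<sigma>0 = mk trC q" "pos 0 2 \<sigma>1 = mk p trC"
    "cost Eg 0 4 2 \<sigma>0 0 \<ge> cost Eg 0 4 2 \<sigma> 0" "cost Eg 0 4 2 \<sigma>1 1 \<ge> cost Eg 0 4 2 \<sigma> 1"
  shows "enat 8 < cost Eg 0 4 2 \<sigma> 0 + cost Eg 0 4 2 \<sigma> 1"
  using assms(1,2)
proof (elim disjE)
  assume "p = trA" "q = trA"
  then show ?thesis using cAA0[of \<sigma>] cAA1[of \<sigma>] assms(3-7) by simp
next
  assume "p = trA" "q = trB"
  then show ?thesis using cAB0[of \<sigma>] cCB0[of \<sigma>0] assms(3-7) assms(6) by simp
next
  assume "p = trA" "q = trC"
  then show ?thesis using cAC0[of \<sigma>] cAC1[of \<sigma>] assms(3-7) by simp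
next
  assume "p = trB" "q = trA"
  then show ?thesis using cBA1[of \<sigma>] cBC1[of \<sigma>1] assms(3-7) assms(7) by simp
next
  assume "p = trB" "q = trB"
  then show ?thesis using cBB0[of \<sigma>] cBB1[of \<sigma>] assms(3-7) by simp
next
  assume "p = trB" "q = trC"
  then show ?thesis using cBC0[of \<sigma>] cBC1[of \<sigma>] assms(3-7) by simp
next
  assume "p = trC" "q = trA"
  then show ?thesis using cCA0[of \<sigma>] cCA1[of \<sigma>] assms(3-7) by simp
next
  assume "p = trC" "q = trB"
  then show ?thesis using cCB0[of \<sigma>] cCB1[of \<sigma>] assms(3-7) by simp
next
  assume "p = trC" "q = trC"
  then show ?thesis using cCC0[of \<sigma>] cCC1[of \<sigma>] assms(3-7) by simp
qed

theorem mainTheorem4: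
  shows "\<exists>V E src tgt n \<pi>. arena V E src tgt \<and> nash_eq V E src tgt n \<pi> \<and>
     (\<forall>\<pi>'. blind_nash_eq V E src tgt n \<pi>' \<longrightarrow>
        social_cost E src tgt n \<pi> < social_cost E src tgt n \<pi>')"
proof (intro exI conjI allI impI)
  show "arena VV Eg 0 4" by (rule arenaEg)
  have vP: "valid_profile VV Eg 2 piP"
    by (rule vp2) (use v_pi0 v_pi1 in \<open>auto simp: piP_def\<close>)
  have posP: "pos 0 2 piP = mk trA trB"
  proof -
    obtain p q where pq: "pos 0 2 piP = mk p q" "p \<in> {trA, trB, trC}" "q \<in> {trA, trB, trC}"
      "\<And>k. pos 0 2 piP k 0 = p k" "\<And>k. pos 0 2 piP k 1 = q k"
      using trajs[OF vP] by blast
    have "p 1 = 2" using pos_pi0[of piP] pq(4) by (simp add: piP_def)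
    then have "p = trA" using tr_det(1)[OF pq(2)] by simp
    moreover have "q = trB"
      using pos_pi1[of piP] pq(4,5) tr_det(2)[OF pq(3)] \<open>p 1 = 2\<close> by (simp add: piP_def)
    ultimately show ?thesis using pq(1) by simp
  qed
  have cP0: "cost Eg 0 4 2 piP 0 = enat 4" by (rule cAB0[OF posP])
  have cP1: "cost Eg 0 4 2 piP 1 = enat 4" by (rule cAB1[OF posP])
  show "nash_eq VV Eg 0 4 2 piP"
    unfolding nash_eq_def
  proof (intro conjI allI impI vP)
    fix i \<tau> assume i: "i < 2" and vt: "valid_strategy VV Eg i \<tau>"
    let ?s = "piP(i := \<tau>)"
    show "cost Eg 0 4 2 piP i \<le> cost Eg 0 4 2 ?s i"
    proof (cases "i = 0")
      case True
      have vs: "valid_profile VV Eg 2 ?s"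
        by (rule vp2) (use vt True in \<open>simp_all add: piP_def v_pi1 v_pi1'\<close>)
      obtain p q where pq: "pos 0 2 ?s = mk p q" "p \<in> {trA, trB, trC}" "q \<in> {trA, trB, trC}"
        "\<And>k. pos 0 2 ?s k 0 = p k" "\<And>k. pos 0 2 ?s k 1 = q k"
        using trajs[OF vs] by blast
      have h1: "?s 1 = pi1" using True by (simp add: piP_def)
      have "pos 0 2 ?s 1 1 = 1 \<and> pos 0 2 ?s 2 1 = (if pos 0 2 ?s 1 0 = 1 then 3 else 2)"
        using pos_pi1[of ?s] h1 by blast
      then have q1: "q 1 = 1" and q2: "q 2 = (if p 1 = 1 then 3 else 2)" using pq(4,5) by auto
      have "p = trA \<or> p = trB \<or> p = trC" using pq(2) by auto
      then show ?thesis
      proof (elim disjE)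
        assume "p = trA"
        then have "q = trB" using tr_det(2)[OF pq(3)] q1 q2 by (simp add: trA_def)
        then show ?thesis using \<open>p = trA\<close> pq(1) cAB0 cP0 True by simp
      next
        assume "p = trB"
        then have "q = trC" using tr_det(3)[OF pq(3)] q1 q2 by (simp add: trB_def)
        then show ?thesis using \<open>p = trB\<close> pq(1) cBC0 cP0 True by simp
      next
        assume "p = trC"
        then have "q = trC" using tr_det(3)[OF pq(3)] q1 q2 by (simp add: trC_def)
        then show ?thesis using \<open>p = trC\<close> pq(1) cCC0 cP0 True by simp
      qed
    next
      case False
      then have i1: "i = 1" using i by simp
      have vs: "valid_profile VV Eg 2 ?s"
        by (rule vp2) (use vt i1 in \<open>simp_all add: piP_def v_pi0\<close>)
      obtain p q where pq: "pos 0 2 ?s = mk p q" "p \<in> {trA, trB, trC}" "q \<in> {trA, trB, trC}"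
        "\<And>k. pos 0 2 ?s k 0 = p k" "\<And>k. pos 0 2 ?s k 1 = q k"
        using trajs[OF vs] by blast
      have "?s 0 = pi0" using i1 by (simp add: piP_def)
      then have "p 1 = 2" using pos_pi0[of ?s] pq(4) by simp
      then have "p = trA" using tr_det(1)[OF pq(2)] by simp
      have "q = trA \<or> q = trB \<or> q = trC" using pq(3) by auto
      then show ?thesis using \<open>p = trA\<close> pq(1) cAA1 cAB1 cAC1 cP1 i1 by auto
    qed
  qed
  fix \<pi>' assume bn: "blind_nash_eq VV Eg 0 4 2 \<pi>'"
  have vs: "valid_profile VV Eg 2 \<pi>'" and bl: "\<And>i. i < 2 \<Longrightarrow> blind_strategy i (\<pi>' i)"
    and ne: "\<And>i \<tau>. i < 2 \<Longrightarrow> valid_strategy VV Eg i \<tau> \<Longrightarrow> blind_strategy i \<tau> \<Longrightarrow>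
        cost Eg 0 4 2 \<pi>' i \<le> cost Eg 0 4 2 (\<pi>'(i := \<tau>)) i"
    using bn unfolding blind_nash_eq_def by auto
  obtain p q where pq: "pos 0 2 \<pi>' = mk p q" "p \<in> {trA, trB, trC}" "q \<in> {trA, trB, trC}"
    "\<And>k. pos 0 2 \<pi>' k 0 = p k" "\<And>k. pos 0 2 \<pi>' k 1 = q k"
    using trajs[OF vs] by blast
  have dev: "cost Eg 0 4 2 (\<pi>'(i := tauC i)) i \<ge> cost Eg 0 4 2 \<pi>' i" if "i < 2" for i
    using ne[OF that v_tau b_tau] .
  have dev_pos: "pos 0 2 (\<pi>'(i := tauC i)) = mk (if i = 0 then trC else p) (if i = 0 then q else trC)"
    if i: "i < 2" for i
  proof -
    let ?s = "\<pi>'(i := tauC i)"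
    have vs': "valid_profile VV Eg 2 ?s"
      using vs i v_tau unfolding valid_profile_def by auto
    obtain p' q' where pq': "pos 0 2 ?s = mk p' q'" "p' \<in> {trA, trB, trC}" "q' \<in> {trA, trB, trC}"
      "\<And>k. pos 0 2 ?s k 0 = p' k" "\<And>k. pos 0 2 ?s k 1 = q' k"
      using trajs[OF vs'] by blast
    have pt: "pos 0 2 ?s 1 i = 1 \<and> pos 0 2 ?s 2 i = 3" by (rule pos_tau) (use i in auto)
    show ?thesis
    proof (cases "i = 0")
      case True
      have "p' = trC" using tr_det(3)[OF pq'(2)] pt pq'(4) True by simp
      moreover have "q' = q"
      proof
        fix k show "q' k = q k"
          using blind_pos[of 1 \<pi>' ?s 2 0 k] bl[of 1] True pq(5) pq'(5) by simp
      qed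
      ultimately show ?thesis using pq'(1) True by simp
    next
      case False
      then have i1: "i = 1" using i by simp
      have "q' = trC" using tr_det(3)[OF pq'(3)] pt pq'(5) i1 by simp
      moreover have "p' = p"
      proof
        fix k show "p' k = p k"
          using blind_pos[of 0 \<pi>' ?s 2 0 k] bl[of 0] i1 pq(4) pq'(4) by simp
      qed
      ultimately show ?thesis using pq'(1) i1 by simp
    qed
  qed
  have sc: "social_cost Eg 0 4 2 \<pi>' = cost Eg 0 4 2 \<pi>' 0 + cost Eg 0 4 2 \<pi>' 1"
    by (rule social2)
  have scP: "social_cost Eg 0 4 2 piP = enat 8"
    unfolding social2 cP0 cP1 by simp
  have d0: "cost Eg 0 4 2 (\<pi>'(0 := tauC 0)) 0 \<ge> cost Eg 0 4 2 \<pi>' 0" using dev[of 0] by simp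
  have d1: "cost Eg 0 4 2 (\<pi>'(1 := tauC 1)) 1 \<ge> cost Eg 0 4 2 \<pi>' 1" using dev[of 1] by simp
  have p0: "pos 0 2 (\<pi>'(0 := tauC 0)) = mk trC q" using dev_pos[of 0] by simp
  have p1: "pos 0 2 (\<pi>'(1 := tauC 1)) = mk p trC" using dev_pos[of 1] by simp
  have "p = trA \<or> p = trB \<or> p = trC" "q = trA \<or> q = trB \<or> q = trC" using pq(2,3) by auto
  then show "social_cost Eg 0 4 2 piP < social_cost Eg 0 4 2 \<pi>'"
    unfolding sc scP by (rule final[OF _ _ pq(1) p0 p1 d0 d1])
qed

end
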